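(* Let $M=M(S^2;\frac{q_1}{p_1},\frac{q_2}{p_2},\frac{q_3}{p_3})$ with $e(M)\neq0$, and suppose at most one of $p_1,p_2,p_3$ is even. Then $x_M=0$ if and only if $p_1,p_2,p_3$ are weakly coprime.
   Context: $M(S^2;\frac{q_1}{p_1},\frac{q_2}{p_2},\frac{q_3}{p_3})$ ($(p_i,q_i)$ coprime, $p_i\ge1$) is the closed Seifert manifold obtained from $S_{0,3}\times S^1$ by gluing solid tori whose meridians are $p_ic_i+q_ih_i$; $e(M)=\sum_iq_i/p_i$; $\pi_1(M)=\langle c_1,c_2,c_3,h\mid [c_i,h]=1=c_i^{p_i}h^{q_i},\ c_1c_2c_3=1\rangle$. Weakly coprime: one of $p_1,p_2,p_3$ is coprime with each of the other two. An abelian character is the trace of a diagonal representation $\pi_1(M)\to\mathrm{SL}_2(\mathbb{C})$; it is exceptional if it is the trace of a representation $\rho$ with $\rho(h)=\pm I$ and $\rho(c_i)\neq\pm I$ for $i=1,2,3$; $x_M$ is the number of exceptional abelian characters. *)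

theory Defs
  imports "HOL-Analysis.Analysis"
begin

type_synonym cmat = "complex^2^2"

definition SL2 :: "cmat set" where
  "SL2 = {A. det A = 1}"

fun mpow :: "cmat \<Rightarrow> nat \<Rightarrow> cmat" where
  "mpow A 0 = mat 1"
| "mpow A (Suc n) = A ** mpow A n"

definition mzpow :: "cmat \<Rightarrow> int \<Rightarrow> cmat" where
  "mzpow A k = (if 0 \<le> k then mpow A (nat k) else mpow (matrix_inv A) (nat (- k)))"

text \<open>Generators of pi_1(M): c_1, c_2, c_3 (written C 1, C 2, C 3) and h (written H).\<close>
datatype gen = C nat | H

definition valid_gen :: "gen \<Rightarrow> bool" where
  "valid_gen g = (g = H \<or> (\<exists>i\<in>{1,2,3}. g = C i))"

text \<open>Words in the generators and their inverses (flag True = inverse letter);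
  elements of pi_1(M) are represented by such words.\<close>
definition words :: "(gen \<times> bool) list set" where
  "words = {w. \<forall>(g,b)\<in>set w. valid_gen g}"

definition letter_val :: "(gen \<Rightarrow> cmat) \<Rightarrow> gen \<times> bool \<Rightarrow> cmat" where
  "letter_val \<rho> l = (if snd l then matrix_inv (\<rho> (fst l)) else \<rho> (fst l))"

definition word_val :: "(gen \<Rightarrow> cmat) \<Rightarrow> (gen \<times> bool) list \<Rightarrow> cmat" where
  "word_val \<rho> w = foldr (\<lambda>l acc. letter_val \<rho> l ** acc) w (mat 1)"

text \<open>A representation pi_1(M) -> SL_2(C), M = M(S^2; q1/p1, q2/p2, q3/p3), given by
  the images of the generators, subject to the defining relations
  [c_i,h] = 1, c_i^{p_i} h^{q_i} = 1, c_1 c_2 c_3 = 1.\<close>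
definition is_rep :: "(nat \<Rightarrow> int) \<Rightarrow> (nat \<Rightarrow> int) \<Rightarrow> (gen \<Rightarrow> cmat) \<Rightarrow> bool" where
  "is_rep p q \<rho> \<longleftrightarrow>
     \<rho> H \<in> SL2 \<and> (\<forall>i\<in>{1,2,3}. \<rho> (C i) \<in> SL2) \<and>
     (\<forall>i\<in>{1,2,3}. \<rho> (C i) ** \<rho> H = \<rho> H ** \<rho> (C i)) \<and>
     (\<forall>i\<in>{1,2,3}. mzpow (\<rho> (C i)) (p i) ** mzpow (\<rho> H) (q i) = mat 1) \<and>
     \<rho> (C 1) ** \<rho> (C 2) ** \<rho> (C 3) = mat 1"

definition diag_mat :: "cmat \<Rightarrow> bool" where
  "diag_mat A \<longleftrightarrow> A $ 1 $ 2 = 0 \<and> A $ 2 $ 1 = 0"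

definition diagonal_rep :: "(nat \<Rightarrow> int) \<Rightarrow> (nat \<Rightarrow> int) \<Rightarrow> (gen \<Rightarrow> cmat) \<Rightarrow> bool" where
  "diagonal_rep p q \<rho> \<longleftrightarrow> is_rep p q \<rho> \<and> diag_mat (\<rho> H) \<and> (\<forall>i\<in>{1,2,3}. diag_mat (\<rho> (C i)))"

definition character :: "(gen \<Rightarrow> cmat) \<Rightarrow> (gen \<times> bool) list \<Rightarrow> complex" where
  "character \<rho> = (\<lambda>w. if w \<in> words then trace (word_val \<rho> w) else 0)"

definition abelian_chars :: "(nat \<Rightarrow> int) \<Rightarrow> (nat \<Rightarrow> int) \<Rightarrow> ((gen \<times> bool) list \<Rightarrow> complex) set" where
  "abelian_chars p q = {character \<rho> | \<rho>. diagonal_rep p q \<rho>}"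

definition exceptional_abelian_chars ::
  "(nat \<Rightarrow> int) \<Rightarrow> (nat \<Rightarrow> int) \<Rightarrow> ((gen \<times> bool) list \<Rightarrow> complex) set" where
  "exceptional_abelian_chars p q =
     {chr \<in> abelian_chars p q. \<exists>\<rho>. is_rep p q \<rho> \<and> character \<rho> = chr \<and>
        (\<rho> H = mat 1 \<or> \<rho> H = - mat 1) \<and>
        (\<forall>i\<in>{1,2,3}. \<rho> (C i) \<noteq> mat 1 \<and> \<rho> (C i) \<noteq> - mat 1)}"

definition x_M :: "(nat \<Rightarrow> int) \<Rightarrow> (nat \<Rightarrow> int) \<Rightarrow> nat" where
  "x_M p q = card (exceptional_abelian_chars p q)"

definition euler_number :: "(nat \<Rightarrow> int) \<Rightarrow> (nat \<Rightarrow> int) \<Rightarrow> real" where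
  "euler_number p q = (\<Sum>i\<in>{1,2,3::nat}. of_int (q i) / of_int (p i))"

definition weakly_coprime :: "(nat \<Rightarrow> int) \<Rightarrow> bool" where
  "weakly_coprime p \<longleftrightarrow> (\<exists>i\<in>{1,2,3}. \<forall>j\<in>{1,2,3}. j \<noteq> i \<longrightarrow> coprime (p i) (p j))"

end

theory Submission
  imports Defs
begin


definition mk :: "complex \<Rightarrow> complex \<Rightarrow> complex \<Rightarrow> complex \<Rightarrow> cmat" where
  "mk a b c d = (\<chi> i j. if i = 1 then (if j = 1 then a else b) else (if j = 1 then c else d))"

lemma mk_nth[simp]: "mk a b c d $ 1 $ 1 = a" "mk a b c d $ 1 $ 2 = b"
  "mk a b c d $ 2 $ 1 = c" "mk a b c d $ 2 $ 2 = d"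
  by (simp_all add: mk_def)

lemma mk_eta: "A = mk (A$1$1) (A$1$2) (A$2$1) (A$2$2)"
  by (simp add: vec_eq_iff forall_2)

lemma mk_eq_iff: "mk a b c d = mk a' b' c' d' \<longleftrightarrow> a = a' \<and> b = b' \<and> c = c' \<and> d = d'"
proof
  assume h: "mk a b c d = mk a' b' c' d'"
  have "mk a b c d $1$1 = mk a' b' c' d' $1$1" "mk a b c d $1$2 = mk a' b' c' d' $1$2"
    "mk a b c d $2$1 = mk a' b' c' d' $2$1" "mk a b c d $2$2 = mk a' b' c' d' $2$2" using h by simp_all
  then show "a = a' \<and> b = b' \<and> c = c' \<and> d = d'" by simp
qed simp

lemma mk_mult: "mk a b c d ** mk a' b' c' d' = mk (a*a' + b*c') (a*b' + b*d') (c*a' + d*c') (c*b' + d*d')"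
proof -
  have "\<And>i j. (mk a b c d ** mk a' b' c' d') $ i $ j = mk (a*a' + b*c') (a*b' + b*d') (c*a' + d*c') (c*b' + d*d') $ i $ j"
    by (simp add: matrix_matrix_mult_def sum_2 mk_def)
  then show ?thesis by (simp add: vec_eq_iff)
qed

lemma mat1_mk: "mat 1 = mk 1 0 0 1"
  unfolding vec_eq_iff by (auto simp: mat_def mk_def forall_2)

lemma negmat1_mk: "- mat 1 = mk (-1) 0 0 (-1)"
  unfolding vec_eq_iff by (auto simp: mat_def mk_def forall_2)

lemma det_mk: "det (mk a b c d) = a*d - b*c"
  by (simp add: det_2)

lemma trace_mk: "trace (mk a b c d) = a + d"
  by (simp add: trace_def sum_2)

lemma matrix_inv_eq:
  assumes "(A::cmat) ** B = mat 1" "B ** A = mat 1"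
  shows "matrix_inv A = B"
proof -
  let ?A' = "matrix_inv A"
  have "A ** ?A' = mat 1 \<and> ?A' ** A = mat 1"
    unfolding matrix_inv_def by (rule someI[of _ B]) (use assms in auto)
  then have "?A' = ?A' ** (A ** B)" "?A' ** A = mat 1" using assms by (auto simp: matrix_mul_rid)
  then show ?thesis by (simp add: matrix_mul_assoc matrix_mul_lid)
qed

lemma mpow_diag: "mpow (mk a 0 0 b) n = mk (a^n) 0 0 (b^n)"
  by (induction n) (simp_all add: mat1_mk mk_mult)

lemma matrix_inv_diag: "a * b = 1 \<Longrightarrow> matrix_inv (mk a 0 0 b) = mk b 0 0 a"
  by (rule matrix_inv_eq) (simp_all add: mk_mult mat1_mk mult.commute)

lemma mzpow_diag: "a * b = 1 \<Longrightarrow> mzpow (mk a 0 0 b) k = mk (a powi k) 0 0 (b powi k)"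
proof -
  assume ab: "a * b = 1"
  then have "b = inverse a" "a = inverse b" by (metis inverse_unique, metis inverse_unique mult.commute)
  then show ?thesis using ab
    by (auto simp: mzpow_def mpow_diag matrix_inv_diag power_int_def power_inverse)
qed



lemma parab_pow:
  assumes "a*d - b*c = 1" "a + d = 2*e" "e^2 = 1"
  shows "mpow (mk a b c d) n = mk (e^n + of_nat n*e^(n+1)*(a-e)) (of_nat n*e^(n+1)*b)
           (of_nat n*e^(n+1)*c) (e^n + of_nat n*e^(n+1)*(d-e))"
proof (induction n)
  case 0
  then show ?case by (simp add: mat1_mk)
next
  case (Suc n)
  define x where "x = e^n"
  define m where "m = (of_nat n :: complex)"
  have e1: "e^(n+1) = x*e" "e^(Suc n) = x*e" "e^(Suc n + 1) = x" using assms(3) by (simp_all add: x_def power2_eq_square)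
  have m1: "of_nat (Suc n) = m + 1" by (simp add: m_def)
  show ?case unfolding mpow.simps Suc e1 m1 unfolding m_def[symmetric] x_def[symmetric] mk_mult mk_eq_iff
    using assms by algebra
qed

lemma parab:
  assumes "det A = 1" "trace A = 2*e" "e^2 = 1" "p \<ge> 1"
    "mpow A p $ 1 $ 2 = 0" "mpow A p $ 2 $ 1 = 0"
  shows "A = mk e 0 0 e"
proof -
  obtain a b c d where A: "A = mk a b c d" using mk_eta by blast
  have h: "a*d - b*c = 1" "a + d = 2*e" using assms(1,2) by (simp_all add: A det_mk trace_mk)
  have e0: "e \<noteq> 0" using assms(3) by auto
  have p0: "(of_nat p :: complex) \<noteq> 0" using assms(4) by simp
  have "of_nat p*e^(p+1)*b = 0" "of_nat p*e^(p+1)*c = 0"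
    using assms(5,6) unfolding A parab_pow[OF h assms(3)] by simp_all
  then have "b = 0" "c = 0" using e0 p0 by simp_all
  then have "a*d = 1" using h by simp
  then have "(a - e)^2 = 0" using h assms(3) by algebra
  then have "a = e" by simp
  then have "d = e" using h by simp
  show ?thesis using A `a = e` `d = e` `b = 0` `c = 0` by simp
qed



lemma word_val_cong: "(\<forall>(g,b)\<in>set w. valid_gen g) \<Longrightarrow> (\<And>g. valid_gen g \<Longrightarrow> \<rho> g = \<sigma> g) \<Longrightarrow> word_val \<rho> w = word_val \<sigma> w"
  by (induction w) (auto simp: word_val_def letter_val_def)

lemma char_cong: "(\<And>g. valid_gen g \<Longrightarrow> \<rho> g = \<sigma> g) \<Longrightarrow> character \<rho> = character \<sigma>"
  unfolding character_def words_def by (rule ext) (auto intro!: arg_cong[where f=trace] word_val_cong)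

lemma char_single: "valid_gen g \<Longrightarrow> character \<rho> [(g,False)] = trace (\<rho> g)"
  by (simp add: character_def words_def word_val_def letter_val_def matrix_mul_rid)

lemma valid_H[simp]: "valid_gen H" and valid_C[simp]: "i \<in> {1,2,3} \<Longrightarrow> valid_gen (C i)"
  by (auto simp: valid_gen_def)

lemma diag_H:
  assumes "diagonal_rep p q \<rho>'" "character \<rho> = character \<rho>'" "\<rho> H = mat 1 \<or> \<rho> H = - mat 1"
  shows "\<exists>e. (e = 1 \<or> e = -1) \<and> \<rho>' H = mk e 0 0 e \<and> \<rho> H = mk e 0 0 e"
proof -
  obtain e where e: "e = 1 \<or> e = -1" "\<rho> H = mk e 0 0 e" using assms(3) mat1_mk negmat1_mk by metis
  obtain t t' where t: "\<rho>' H = mk t 0 0 t'" using assms(1) unfolding diagonal_rep_def diag_mat_def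
    by (metis mk_eta)
  have "t * t' = 1" using assms(1) t by (simp add: diagonal_rep_def is_rep_def SL2_def det_mk)
  moreover have "t + t' = 2*e" using char_single[of H \<rho>] char_single[of H \<rho>'] assms(2) t e
    by (simp add: trace_mk)
  moreover have "e^2 = 1" using e by auto
  ultimately have "(t - e)^2 = 0" by algebra
  then have "t = e" by simp
  then have "t' = e" using \<open>t + t' = 2*e\<close> by simp
  then show ?thesis using e t \<open>t = e\<close> by blast
qed

lemma powi_sq: "(e::complex) = 1 \<or> e = -1 \<Longrightarrow> (e powi k)^2 = 1"
proof -
  assume "e = 1 \<or> e = -1"
  then have "e * e = 1" by auto
  then have "(e*e) powi k = 1" by simp
  then show ?thesis by (simp add: power2_eq_square power_int_mult_distrib)
qed

lemma diag_C:
  assumes "diagonal_rep p q \<rho>'" "\<rho>' H = mk e 0 0 e" "e = 1 \<or> e = -1" "i \<in> {1,2,3}" "p i \<ge> 1"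
  shows "\<exists>a b. \<rho>' (C i) = mk a 0 0 b \<and> a*b = 1 \<and> a^(2*nat(p i)) = 1"
proof -
  obtain a b where ab: "\<rho>' (C i) = mk a 0 0 b" using assms(1,4) unfolding diagonal_rep_def diag_mat_def
    by (metis mk_eta)
  have "det (\<rho>' (C i)) = 1" using assms(1,4) unfolding diagonal_rep_def is_rep_def SL2_def by blast
  then have ab1: "a * b = 1" using ab by (simp add: det_mk)
  have ee: "e * e = 1" using assms(3) by auto
  have "mzpow (\<rho>' (C i)) (p i) ** mzpow (\<rho>' H) (q i) = mat 1"
    using assms(1,4) unfolding diagonal_rep_def is_rep_def by blast
  then have "a powi p i * e powi q i = 1"
    unfolding ab assms(2) mzpow_diag[OF ab1] mzpow_diag[OF ee] mk_mult mat1_mk mk_eq_iff by simp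
  then have "(a powi p i)^2 * (e powi q i)^2 = 1" by (metis power_mult_distrib power_one)
  then have "(a ^ nat (p i))^2 = 1" using powi_sq[OF assms(3)] assms(5) by (simp add: power_int_nonneg_exp)
  then have "a^(2*nat(p i)) = 1" by (simp add: power_mult mult.commute)
  then show ?thesis using ab ab1 by blast
qed

lemma root_gcd:
  assumes "(z::complex)^m = 1" "z^n = 1" "m \<noteq> 0"
  shows "z^(gcd m n) = 1"
proof -
  obtain x y where "m * x = n * y + gcd m n" using bezout_nat[OF assms(3)] by blast
  then have "(z^m)^x = (z^n)^y * z^(gcd m n)" by (metis power_add power_mult)
  then show ?thesis using assms by simp
qed

lemma nt_center:
  assumes "(z::complex)^(2*P) = 1" "x^(2*Q) = 1" "y^(2*R) = 1" "z*x*y = 1"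
    "coprime P Q" "coprime P R" "P \<ge> 1" "Q \<ge> 1" "R \<ge> 1"
  shows "z = 1 \<or> z = -1"
proof -
  have "(x*y)^(2*(Q*R)) = 1"
  proof -
    have "(x*y)^(2*(Q*R)) = ((x^(2*Q))^R) * ((y^(2*R))^Q)"
      by (simp add: power_mult_distrib power_mult[symmetric] ac_simps)
    then show ?thesis using assms by simp
  qed
  then have "(z*(x*y))^(2*(Q*R)) = z^(2*(Q*R))" by (simp add: power_mult_distrib)
  then have z2: "z^(2*(Q*R)) = 1" using assms(4) `(x*y)^(2*(Q*R)) = 1` by (simp add: mult.assoc)
  have "coprime P (Q*R)" using assms(5,6) by simp
  then have "gcd (2*P) (2*(Q*R)) = 2" by (metis gcd_mult_distrib_nat coprime_iff_gcd_eq_1 mult_1_right)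
  then have "z^2 = 1" using root_gcd[OF assms(1) z2] assms(7) by simp
  then show ?thesis by (simp add: power2_eq_1_iff)
qed



lemma rep_diag_entries:
  assumes "diagonal_rep p q \<rho>'" "i \<in> {1,2,3}"
  shows "\<rho>' (C i) = mk (\<rho>' (C i) $ 1 $ 1) 0 0 (\<rho>' (C i) $ 2 $ 2)"
  using assms unfolding diagonal_rep_def diag_mat_def by (metis mk_eta)

lemma is_rep_det: "is_rep p q \<rho> \<Longrightarrow> i \<in> {1,2,3} \<Longrightarrow> det (\<rho> (C i)) = 1"
  unfolding is_rep_def SL2_def by auto

lemma is_rep_rel: "is_rep p q \<rho> \<Longrightarrow> i \<in> {1,2,3} \<Longrightarrow> mzpow (\<rho> (C i)) (p i) ** mzpow (\<rho> H) (q i) = mat 1"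
  unfolding is_rep_def by auto

lemma no_exc:
  assumes pos: "\<forall>i\<in>{1,2,3}. p i \<ge> 1" and S: "{c,j,k} = {1,2,3::nat}" "c\<noteq>j" "c\<noteq>k" "j\<noteq>k"
    and cop: "coprime (p c) (p j)" "coprime (p c) (p k)"
  shows "exceptional_abelian_chars p q = {}"
proof (rule ccontr)
  assume "exceptional_abelian_chars p q \<noteq> {}"
  then obtain chr where "chr \<in> exceptional_abelian_chars p q" by blast
  then obtain \<rho>' \<rho> where d: "diagonal_rep p q \<rho>'" and chr: "chr = character \<rho>'"
    and r: "is_rep p q \<rho>" "character \<rho> = chr" "\<rho> H = mat 1 \<or> \<rho> H = - mat 1"
       "\<forall>i\<in>{1,2,3}. \<rho> (C i) \<noteq> mat 1 \<and> \<rho> (C i) \<noteq> - mat 1"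
    unfolding exceptional_abelian_chars_def abelian_chars_def by blast
  have cc: "character \<rho> = character \<rho>'" using r chr by simp
  obtain e where e: "e = 1 \<or> e = -1" "\<rho>' H = mk e 0 0 e" "\<rho> H = mk e 0 0 e"
    using diag_H[OF d cc r(3)] by blast
  have inS: "c \<in> {1,2,3}" "j \<in> {1,2,3}" "k \<in> {1,2,3}" using S(1) by blast+
  define x where "x i = \<rho>' (C i) $ 1 $ 1" for i
  define y where "y i = \<rho>' (C i) $ 2 $ 2" for i
  have xy: "\<And>i::nat. i \<in> {1,2,3} \<Longrightarrow> \<rho>' (C i) = mk (x i) 0 0 (y i)"
    using rep_diag_entries[OF d] by (simp add: x_def y_def)
  have "\<rho>' (C 1) ** \<rho>' (C 2) ** \<rho>' (C 3) = mat 1" using d by (simp add: diagonal_rep_def is_rep_def)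
  then have "x 1 * x 2 * x 3 = 1" using xy[of 1] xy[of 2] xy[of 3] by (simp add: mk_mult mat1_mk mk_eq_iff)
  then have "prod x {1,2,3} = 1" by (simp add: mult.assoc)
  moreover have "prod x {c,j,k} = x c * (x j * x k)" using S(2-4) by simp
  ultimately have prodx: "x c * x j * x k = 1" using S(1) by (simp add: mult.assoc)
  have xpow: "\<And>i::nat. i \<in> {1,2,3} \<Longrightarrow> x i ^ (2*nat(p i)) = 1 \<and> x i * y i = 1"
  proof -
    fix i :: nat assume i: "i \<in> {1,2,3}"
    obtain a b where "\<rho>' (C i) = mk a 0 0 b \<and> a*b = 1 \<and> a^(2*nat(p i)) = 1"
      using diag_C[OF d e(2) e(1) i] pos i by blast
    then show "x i ^ (2*nat(p i)) = 1 \<and> x i * y i = 1" using xy[OF i] by (simp add: mk_eq_iff)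
  qed
  have pc: "0 \<le> p c" "0 \<le> p j" "0 \<le> p k" using pos inS by auto
  have "coprime (int (nat (p c))) (int (nat (p j)))" "coprime (int (nat (p c))) (int (nat (p k)))"
    using cop pc by simp_all
  then have "coprime (nat (p c)) (nat (p j))" "coprime (nat (p c)) (nat (p k))"
    by (simp_all only: coprime_int_iff)
  moreover have "nat (p c) \<ge> 1" "nat (p j) \<ge> 1" "nat (p k) \<ge> 1" using pos inS by auto
  ultimately have z: "x c = 1 \<or> x c = -1"
    using nt_center[of "x c" "nat (p c)" "x j" "nat (p j)" "x k" "nat (p k)"] 
      conjunct1[OF xpow[OF inS(1)]] conjunct1[OF xpow[OF inS(2)]] conjunct1[OF xpow[OF inS(3)]] prodx by blast
  moreover have "y c = inverse (x c)" using xpow[OF inS(1)] by (metis inverse_unique)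
  ultimately have "y c = x c" by auto
  then have "trace (\<rho>' (C c)) = 2 * x c" using xy[OF inS(1)] by (simp add: trace_mk)
  then have tr: "trace (\<rho> (C c)) = 2 * x c" using char_single[of "C c" \<rho>] char_single[of "C c" \<rho>'] cc inS by simp
  have det: "det (\<rho> (C c)) = 1" by (rule is_rep_det[OF r(1) inS(1)])
  have rel: "mzpow (\<rho> (C c)) (p c) ** mzpow (\<rho> H) (q c) = mat 1" by (rule is_rep_rel[OF r(1) inS(1)])
  have ee: "e * e = 1" using e(1) by (elim disjE) simp_all
  define u where "u = e powi q c"
  have u2: "u^2 = 1" unfolding u_def by (rule powi_sq[OF e(1)])
  have u0: "u \<noteq> 0"
  proof
    assume "u = 0" then show False using u2 by simp
  qed
  define M where "M = mpow (\<rho> (C c)) (nat (p c))"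
  have pc0: "0 \<le> p c" using pos inS(1) by auto
  have MM: "mzpow (\<rho> (C c)) (p c) = M" unfolding M_def mzpow_def using pc0 by simp
  have HH: "mzpow (\<rho> H) (q c) = mk u 0 0 u" unfolding e(3) u_def by (rule mzpow_diag[OF ee])
  have "M ** mk u 0 0 u = mat 1" using rel by (simp only: MM HH)
  moreover obtain m1 m2 m3 m4 where Mm: "M = mk m1 m2 m3 m4" using mk_eta by blast
  ultimately have "mk m1 m2 m3 m4 ** mk u 0 0 u = mk 1 0 0 1" by (simp add: mat1_mk)
  then have "m2 * u = 0" "m3 * u = 0" by (simp_all add: mk_mult mk_eq_iff)
  then have "m2 = 0" "m3 = 0" using u0 by simp_all
  then have off: "M$1$2 = 0" "M$2$1 = 0" using Mm by simp_all
  have "(x c)^2 = 1" using z by auto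
  have "\<rho> (C c) = mk (x c) 0 0 (x c)"
    by (rule parab[OF det tr \<open>(x c)^2 = 1\<close> \<open>nat (p c) \<ge> 1\<close> off[unfolded M_def]])
  note eqc = this
  have ne: "\<rho> (C c) \<noteq> mat 1" "\<rho> (C c) \<noteq> - mat 1" using r(4) inS(1) by blast+
  show False using z
  proof
    assume "x c = 1"
    then have "\<rho> (C c) = mat 1" using eqc by (simp add: mat1_mk)
    then show False using ne by blast
  next
    assume "x c = -1"
    then have "\<rho> (C c) = mk (-1) 0 0 (-1)" using eqc by simp
    then have "\<rho> (C c) = - mat 1" by (simp only: negmat1_mk)
    then show False using ne by blast
  qed
qed



definition build :: "cmat \<times> cmat \<times> cmat \<times> cmat \<Rightarrow> gen \<Rightarrow> cmat" where
  "build X g = (case X of (A,B1,B2,B3) \<Rightarrow> (case g of H \<Rightarrow> A | C i \<Rightarrow> if i = 1 then B1 else if i = 2 then B2 else B3))"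

lemma char_build: "character \<rho> = character (build (\<rho> H, \<rho> (C 1), \<rho> (C 2), \<rho> (C 3)))"
proof (rule char_cong)
  fix g assume "valid_gen g"
  then have "g = H \<or> g = C 1 \<or> g = C 2 \<or> g = C 3" by (auto simp: valid_gen_def)
  then show "\<rho> g = build (\<rho> H, \<rho> (C 1), \<rho> (C 2), \<rho> (C 3)) g" by (auto simp: build_def)
qed

lemma exc_finite:
  assumes pos: "\<forall>i\<in>{1,2,3}. p i \<ge> 1"
  shows "finite (exceptional_abelian_chars p q)"
proof -
  define R where "R i = (\<lambda>a. mk a 0 0 (inverse a)) ` {a. a^(2*nat(p i)) = 1}" for i
  have fR: "finite (R i)" if "i \<in> {1,2,3}" for i
  proof -
    have "1 \<le> 2*nat(p i)" using pos that by auto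
    then show ?thesis unfolding R_def by (intro finite_imageI finite_roots_unity)
  qed
  define F where "F = {mk 1 0 0 1, mk (-1) 0 0 (-1)} \<times> R 1 \<times> R 2 \<times> R 3"
  have fF: "finite F" unfolding F_def using fR by simp
  have "exceptional_abelian_chars p q \<subseteq> (\<lambda>X. character (build X)) ` F"
  proof
    fix chr assume "chr \<in> exceptional_abelian_chars p q"
    then obtain \<rho>' \<rho> where d: "diagonal_rep p q \<rho>'" and chr: "chr = character \<rho>'"
      and r: "is_rep p q \<rho>" "character \<rho> = chr" "\<rho> H = mat 1 \<or> \<rho> H = - mat 1"
      unfolding exceptional_abelian_chars_def abelian_chars_def by blast
    have cc: "character \<rho> = character \<rho>'" using r chr by simp
    obtain e where e: "e = 1 \<or> e = -1" "\<rho>' H = mk e 0 0 e"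
      using diag_H[OF d cc r(3)] by blast
    have inR: "\<rho>' (C i) \<in> R i" if i: "i \<in> {1,2,3}" for i
    proof -
      obtain a b where ab: "\<rho>' (C i) = mk a 0 0 b" "a*b = 1" "a^(2*nat(p i)) = 1"
        using diag_C[OF d e(2) e(1) i] pos i by blast
      then have "b = inverse a" by (metis inverse_unique)
      then show ?thesis unfolding R_def using ab by blast
    qed
    have "\<rho>' H \<in> {mk 1 0 0 1, mk (-1) 0 0 (-1)}" using e by auto
    then have "(\<rho>' H, \<rho>' (C 1), \<rho>' (C 2), \<rho>' (C 3)) \<in> F" unfolding F_def using inR by simp
    moreover have "chr = character (build (\<rho>' H, \<rho>' (C 1), \<rho>' (C 2), \<rho>' (C 3)))"
      using chr char_build by simp
    ultimately show "chr \<in> (\<lambda>X. character (build X)) ` F" by blast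
  qed
  then show ?thesis using fF finite_subset by blast
qed

definition ex :: "real \<Rightarrow> complex" where
  "ex t = exp (2 * of_real pi * \<i> * of_real t)"

lemma ex_add: "ex (s + t) = ex s * ex t"
  by (simp add: ex_def exp_add[symmetric] distrib_left)

lemma ex_pow: "ex t ^ n = ex (of_nat n * t)"
  by (simp add: ex_def exp_of_nat_mult[symmetric] ac_simps)

lemma ex_neg: "ex t * ex (- t) = 1"
proof -
  have "ex t * ex (- t) = ex (t + - t)" by (rule ex_add[symmetric])
  also have "\<dots> = 1" by (simp add: ex_def)
  finally show ?thesis .
qed

lemma ex_eq_1: "ex t = 1 \<longleftrightarrow> t \<in> \<int>"
proof
  assume "ex t = 1"
  then obtain n :: int where "2 * pi * t = of_int (2*n) * pi" unfolding ex_def exp_eq_1 by auto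
  then have "t = of_int n" by simp
  then show "t \<in> \<int>" by simp
next
  assume "t \<in> \<int>"
  then obtain n where "t = of_int n" by (auto elim: Ints_cases)
  then show "ex t = 1" unfolding ex_def exp_eq_1 by (auto intro!: exI[of _ n])
qed

lemma ex_pm1: "ex t = 1 \<or> ex t = -1 \<Longrightarrow> 2 * t \<in> \<int>"
proof -
  assume "ex t = 1 \<or> ex t = -1"
  then have "ex t ^ 2 = 1" by auto
  then have "ex (2 * t) = 1" using ex_pow[of t 2] by simp
  then show ?thesis using ex_eq_1 by blast
qed



lemma ex_powi: "0 \<le> k \<Longrightarrow> ex t powi k = ex (of_int k * t)"
  by (simp add: power_int_nonneg_exp ex_pow)

lemma int_div_Ints: "(r::int) dvd n \<Longrightarrow> r \<noteq> 0 \<Longrightarrow> of_int n * (1 / of_int r) \<in> (\<int>::real set)"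
proof -
  assume "r dvd n" "r \<noteq> 0"
  then obtain m where "n = r * m" by (auto elim: dvdE)
  then have "of_int n * (1 / of_int r) = (of_int m :: real)" using \<open>r \<noteq> 0\<close> by simp
  then show ?thesis by simp
qed

lemma not_Ints_01: "(x::real) \<in> \<int> \<Longrightarrow> 0 < x \<Longrightarrow> x < 1 \<Longrightarrow> False"
  by (auto elim!: Ints_cases)

lemma frac1: "(r::int) \<ge> 3 \<Longrightarrow> 2 * (1 / of_int r) \<notin> (\<int>::real set)"
proof
  assume r: "r \<ge> 3" and h: "2 * (1 / of_int r) \<in> (\<int>::real set)"
  have "(of_int r::real) \<ge> 3" using r by simp
  then have "0 < 2 * (1 / (of_int r::real))" "2 * (1 / (of_int r::real)) < 1" by (simp_all add: field_simps)
  then show False using not_Ints_01 h by blast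
qed

lemma frac2:
  assumes "(r::int) \<ge> 3" "(s::int) \<ge> 3" "odd r" "odd s"
  shows "2 * (- (1 / of_int r + 1 / of_int s)) \<notin> (\<int>::real set)"
proof
  assume h: "2 * (- (1 / of_int r + 1 / of_int s)) \<in> (\<int>::real set)"
  then have "- (2 * (- (1 / of_int r + 1 / of_int s))) \<in> (\<int>::real set)" by (rule Ints_minus)
  then obtain n where n0: "- (2 * (- (1 / of_int r + 1 / of_int s))) = (of_int n :: real)"
    by (rule Ints_cases)
  have n: "2 * (1 / of_int r + 1 / of_int s) = (of_int n :: real)" using n0 by simp
  have R: "(of_int r::real) \<ge> 3" "(of_int s::real) \<ge> 3" using assms by simp_all
  have "1 / (of_int r::real) \<le> 1/3" "1 / (of_int s::real) \<le> 1/3" using R by (simp_all add: field_simps)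
  moreover have "0 < 1 / (of_int r::real)" "0 < 1 / (of_int s::real)" using R by simp_all
  ultimately have "(0::real) < of_int n \<and> (of_int n::real) < 2" unfolding n[symmetric]
  proof -
    have L: "\<And>x y::real. 0 < x \<Longrightarrow> x \<le> 1/3 \<Longrightarrow> 0 < y \<Longrightarrow> y \<le> 1/3 \<Longrightarrow> 0 < 2*(x+y) \<and> 2*(x+y) < 2"
      by auto
    assume "1 / (of_int r::real) \<le> 1/3" "1 / (of_int s::real) \<le> 1/3" "0 < 1 / (of_int r::real)" "0 < 1 / (of_int s::real)"
    then show "0 < 2 * (1 / (of_int r::real) + 1 / of_int s) \<and> 2 * (1 / (of_int r::real) + 1 / of_int s) < 2"
      using L by blast
  qed
  then have "(0::real) < of_int n" "(of_int n::real) < 2" by simp_all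
  then have "n = 1" by linarith
  then have "2 * (1 / of_int r + 1 / of_int s) = (1::real)" using n by simp
  then have "2 * of_int s + 2 * of_int r = (of_int r * of_int s :: real)" using R by (simp add: field_simps)
  then have "(of_int (2 * (s + r)) :: real) = of_int (r * s)" by simp
  then have "2 * (s + r) = r * s" by (simp only: of_int_eq_iff)
  then have "even (r * s)" by (metis dvd_triv_left)
  then show False using assms(3,4) by simp
qed

lemma int_ge3: "(g::int) \<noteq> 1 \<Longrightarrow> g \<noteq> 0 \<Longrightarrow> g \<ge> 0 \<Longrightarrow> g \<noteq> 2 \<Longrightarrow> g \<ge> 3"
  by presburger

lemma gcd_facts:
  assumes "(a::int) \<ge> 1" "b \<ge> 1" "\<not> coprime a b" "\<not> (even a \<and> even b)"
  shows "gcd a b \<ge> 3 \<and> odd (gcd a b) \<and> gcd a b dvd a \<and> gcd a b dvd b"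
proof -
  have d: "gcd a b dvd a" "gcd a b dvd b" by simp_all
  have "gcd a b \<noteq> 1" using assms(3) by (simp add: coprime_iff_gcd_eq_1)
  moreover have "gcd a b \<noteq> 0" using assms(1) by simp
  moreover have "gcd a b \<ge> 0" by simp
  moreover have o: "odd (gcd a b)"
  proof
    assume "even (gcd a b)"
    then have "even a" "even b" using d dvd_trans by blast+
    then show False using assms(4) by blast
  qed
  moreover have "gcd a b \<noteq> 2"
  proof
    assume "gcd a b = 2"
    then have "even (gcd a b)" by simp
    then show False using o by blast
  qed
  ultimately show ?thesis using d int_ge3 by blast
qed

lemma exc_exists:
  assumes pos: "\<forall>i\<in>{1,2,3}. p i \<ge> 1" and S: "{c,j,k} = {1,2,3::nat}" "c\<noteq>j" "c\<noteq>k" "j\<noteq>k"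
    and nc: "\<not> coprime (p c) (p j)" "\<not> coprime (p c) (p k)"
    and par: "\<not> (even (p c) \<and> even (p j))" "\<not> (even (p c) \<and> even (p k))"
  shows "exceptional_abelian_chars p q \<noteq> {}"
proof -
  have inS: "c \<in> {1,2,3}" "j \<in> {1,2,3}" "k \<in> {1,2,3}" using S(1) by blast+
  define r where "r = gcd (p c) (p j)"
  define s where "s = gcd (p c) (p k)"
  have r: "r \<ge> 3" "odd r" "r dvd p c" "r dvd p j"
    using gcd_facts[of "p c" "p j"] pos inS nc par unfolding r_def by auto
  have s: "s \<ge> 3" "odd s" "s dvd p c" "s dvd p k"
    using gcd_facts[of "p c" "p k"] pos inS nc par unfolding s_def by auto
  define t :: "nat \<Rightarrow> real" where
    "t m = (if m = j then 1 / of_int r else if m = k then 1 / of_int s else - (1 / of_int r + 1 / of_int s))" for m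
  have tj: "t j = 1 / of_int r" and tk: "t k = 1 / of_int s" and tc: "t c = - (1 / of_int r + 1 / of_int s)"
    using S by (simp_all add: t_def)
  have cases3: "m = c \<or> m = j \<or> m = k" if "m \<in> {1,2,3}" for m using S(1) that by blast
  have pt: "of_int (p m) * t m \<in> \<int>" if m: "m \<in> {1,2,3}" for m
  proof -
    have rz: "r \<noteq> 0" "s \<noteq> 0" using r s by auto
    consider "m = c" | "m = j" | "m = k" using cases3[OF m] by blast
    then show ?thesis
    proof cases
      case 1
      have "of_int (p c) * t c = - (of_int (p c) * (1 / of_int r) + of_int (p c) * (1 / of_int s))"
        unfolding tc by (simp add: algebra_simps)
      also have "\<dots> \<in> \<int>" using int_div_Ints[OF r(3) rz(1)] int_div_Ints[OF s(3) rz(2)] by simp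
      finally show ?thesis using 1 by simp
    next
      case 2 then show ?thesis using int_div_Ints[OF r(4) rz(1)] tj by simp
    next
      case 3 then show ?thesis using int_div_Ints[OF s(4) rz(2)] tk by simp
    qed
  qed
  have nt: "2 * t m \<notin> \<int>" if m: "m \<in> {1,2,3}" for m
  proof -
    consider "m = c" | "m = j" | "m = k" using cases3[OF m] by blast
    then show ?thesis
    proof cases
      case 1 then show ?thesis using frac2[OF r(1) s(1) r(2) s(2)] tc by simp
    next
      case 2 then show ?thesis using frac1[OF r(1)] tj by simp
    next
      case 3 then show ?thesis using frac1[OF s(1)] tk by simp
    qed
  qed
  have "sum t {c,j,k} = t c + (t j + t k)" using S(2-4) by simp
  also have "\<dots> = 0" unfolding tc tj tk by simp
  finally have "sum t {1,2,3} = 0" using S(1) by simp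
  then have sum0: "t 1 + t 2 + t 3 = 0" by (simp add: add.assoc)
  define \<rho> where "\<rho> g = (case g of H \<Rightarrow> mat 1 | C m \<Rightarrow> mk (ex (t m)) 0 0 (ex (- t m)))" for g
  have \<rho>H: "\<rho> H = mat 1" and \<rho>C: "\<rho> (C m) = mk (ex (t m)) 0 0 (ex (- t m))" for m by (simp_all add: \<rho>_def)
  have m1: "mzpow (mat 1) k' = mat 1" for k'
    using mzpow_diag[of 1 1 k'] by (simp add: mat1_mk)
  have pow1: "mzpow (\<rho> (C m)) (p m) = mat 1" if m: "m \<in> {1,2,3}" for m
  proof -
    have p0: "0 \<le> p m" using pos m by auto
    have "ex (t m) powi p m = 1" using ex_powi[OF p0] pt[OF m] ex_eq_1 by simp
    moreover have "ex (- t m) powi p m = 1"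
    proof -
      have "of_int (p m) * (- t m) = - (of_int (p m) * t m)" by simp
      then have "of_int (p m) * (- t m) \<in> \<int>" using pt[OF m] by (metis Ints_minus)
      then show ?thesis using ex_powi[OF p0] ex_eq_1 by simp
    qed
    ultimately show ?thesis unfolding \<rho>C mzpow_diag[OF ex_neg] by (simp add: mat1_mk)
  qed
  have isr: "is_rep p q \<rho>"
    unfolding is_rep_def
  proof (intro conjI ballI)
    show "\<rho> H \<in> SL2" by (simp add: \<rho>H SL2_def)
  next
    fix i :: nat assume "i \<in> {1,2,3}"
    show "\<rho> (C i) \<in> SL2" by (simp add: \<rho>C SL2_def det_mk ex_neg)
  next
    fix i :: nat assume "i \<in> {1,2,3}"
    show "\<rho> (C i) ** \<rho> H = \<rho> H ** \<rho> (C i)" by (simp add: \<rho>H matrix_mul_lid matrix_mul_rid)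
  next
    fix i :: nat assume i: "i \<in> {1,2,3}"
    show "mzpow (\<rho> (C i)) (p i) ** mzpow (\<rho> H) (q i) = mat 1"
      using pow1[OF i] by (simp add: \<rho>H m1 matrix_mul_lid)
  next
    have "ex (t 1) * ex (t 2) * ex (t 3) = 1" using sum0 by (simp add: ex_add[symmetric] ex_eq_1)
    moreover have "ex (- t 1) * ex (- t 2) * ex (- t 3) = 1"
    proof -
      have "- t 1 + - t 2 + - t 3 = 0" using sum0 by simp
      then show ?thesis by (simp add: ex_add[symmetric] ex_eq_1)
    qed
    ultimately show "\<rho> (C 1) ** \<rho> (C 2) ** \<rho> (C 3) = mat 1"
      by (simp add: \<rho>C mk_mult mat1_mk)
  qed
  have dr: "diagonal_rep p q \<rho>"
    unfolding diagonal_rep_def using isr by (simp add: diag_mat_def \<rho>H \<rho>C mat1_mk)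
  have nn: "\<rho> (C i) \<noteq> mat 1 \<and> \<rho> (C i) \<noteq> - mat 1" if i: "i \<in> {1,2,3}" for i
  proof -
    have "ex (t i) \<noteq> 1" "ex (t i) \<noteq> -1" using ex_pm1[of "t i"] nt[OF i] by auto
    then have "mk (ex (t i)) 0 0 (ex (- t i)) \<noteq> mk 1 0 0 1" "mk (ex (t i)) 0 0 (ex (- t i)) \<noteq> mk (-1) 0 0 (-1)"
      by (simp_all add: mk_eq_iff)
    then show ?thesis unfolding \<rho>C negmat1_mk by (simp add: mat1_mk)
  qed
  have "character \<rho> \<in> exceptional_abelian_chars p q"
    unfolding exceptional_abelian_chars_def abelian_chars_def
    using dr isr nn \<rho>H by blast
  then show ?thesis by blast
qed



lemma parity:
  assumes "card {i\<in>{1,2,3::nat}. even (p i)} \<le> 1" "a \<in> {1,2,3}" "b \<in> {1,2,3}" "a \<noteq> b"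
  shows "\<not> (even (p a) \<and> even (p b))"
proof
  assume h: "even (p a) \<and> even (p b)"
  have "{a,b} \<subseteq> {i\<in>{1,2,3::nat}. even (p i)}" using h assms(2,3) by auto
  then have "card {a,b} \<le> card {i\<in>{1,2,3::nat}. even (p i)}" by (intro card_mono) auto
  then show False using assms(1,4) by simp
qed

lemma not_wc:
  assumes "\<not> weakly_coprime p"
  shows "\<exists>c j k. {c,j,k} = {1,2,3::nat} \<and> c\<noteq>j \<and> c\<noteq>k \<and> j\<noteq>k \<and> \<not> coprime (p c) (p j) \<and> \<not> coprime (p c) (p k)"
proof -
  have h1: "\<not> coprime (p 1) (p 2) \<or> \<not> coprime (p 1) (p 3)"
   and h2: "\<not> coprime (p 2) (p 1) \<or> \<not> coprime (p 2) (p 3)"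
   and h3: "\<not> coprime (p 3) (p 1) \<or> \<not> coprime (p 3) (p 2)"
    using assms unfolding weakly_coprime_def by auto
  have c12: "coprime (p 1) (p 2) = coprime (p 2) (p 1)" and c13: "coprime (p 1) (p 3) = coprime (p 3) (p 1)"
    and c23: "coprime (p 2) (p 3) = coprime (p 3) (p 2)" by (simp_all add: coprime_commute)
  have s1: "{1,2,3} = {1,2,3::nat}" and s2: "{2,1,3} = {1,2,3::nat}" and s3: "{3,1,2} = {1,2,3::nat}" by auto
  show ?thesis
  proof (cases "\<not> coprime (p 1) (p 2) \<and> \<not> coprime (p 1) (p 3)")
    case True then show ?thesis using s1 by (intro exI[of _ 1] exI[of _ 2] exI[of _ 3]) simp
  next
    case F1: False
    show ?thesis
    proof (cases "\<not> coprime (p 2) (p 1) \<and> \<not> coprime (p 2) (p 3)")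
      case True then show ?thesis using s2 by (intro exI[of _ 2] exI[of _ 1] exI[of _ 3]) simp
    next
      case False
      then have "\<not> coprime (p 3) (p 1) \<and> \<not> coprime (p 3) (p 2)" using F1 h1 h2 h3 c12 c13 c23 by blast
      then show ?thesis using s3 by (intro exI[of _ 3] exI[of _ 1] exI[of _ 2]) simp
    qed
  qed
qed

theorem corollary5p7:
  fixes p q :: "nat \<Rightarrow> int"
  assumes "\<forall>i\<in>{1,2,3}. p i \<ge> 1 \<and> coprime (p i) (q i)"
    and "euler_number p q \<noteq> 0"
    and "card {i\<in>{1,2,3::nat}. even (p i)} \<le> 1"
  shows "x_M p q = 0 \<longleftrightarrow> weakly_coprime p"
proof
  have pos: "\<forall>i\<in>{1,2,3}. p i \<ge> 1" using assms(1) by blast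
  assume x0: "x_M p q = 0"
  have fin: "finite (exceptional_abelian_chars p q)" by (rule exc_finite[OF pos])
  have c0: "card (exceptional_abelian_chars p q) = 0" using x0 by (simp only: x_M_def)
  have E0: "exceptional_abelian_chars p q = {}" using card_0_eq[OF fin] c0 by (rule iffD1)
  show "weakly_coprime p"
  proof (rule ccontr)
    assume "\<not> weakly_coprime p"
    then have "\<exists>c j k. {c,j,k} = {1,2,3::nat} \<and> c\<noteq>j \<and> c\<noteq>k \<and> j\<noteq>k \<and> \<not> coprime (p c) (p j) \<and> \<not> coprime (p c) (p k)"
      by (rule not_wc)
    then obtain c j k where S: "{c,j,k} = {1,2,3::nat}" "c\<noteq>j" "c\<noteq>k" "j\<noteq>k"
      and nc: "\<not> coprime (p c) (p j)" "\<not> coprime (p c) (p k)" by (elim exE conjE)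
    have inS: "c \<in> {1,2,3}" "j \<in> {1,2,3}" "k \<in> {1,2,3}" using S(1) by blast+
    have "\<not> (even (p c) \<and> even (p j))" "\<not> (even (p c) \<and> even (p k))"
      using parity[OF assms(3) inS(1) inS(2) S(2)] parity[OF assms(3) inS(1) inS(3) S(3)] by simp_all
    then have "exceptional_abelian_chars p q \<noteq> {}" by (rule exc_exists[OF pos S nc])
    then show False using E0 by blast
  qed
next
  have pos: "\<forall>i\<in>{1,2,3}. p i \<ge> 1" using assms(1) by blast
  assume "weakly_coprime p"
  then obtain i where i: "i \<in> {1,2,3}" and cop: "\<forall>j\<in>{1,2,3}. j \<noteq> i \<longrightarrow> coprime (p i) (p j)"
    unfolding weakly_coprime_def by blast
  have "exceptional_abelian_chars p q = {}"
  proof -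
    consider "i = 1" | "i = 2" | "i = 3" using i by blast
    then show ?thesis
    proof cases
      case 1 then show ?thesis using no_exc[OF pos, of 1 2 3] cop by auto
    next
      case 2 then show ?thesis using no_exc[OF pos, of 2 1 3] cop by auto
    next
      case 3 then show ?thesis using no_exc[OF pos, of 3 1 2] cop by auto
    qed
  qed
  then show "x_M p q = 0" unfolding x_M_def by (simp only: card.empty)
qed

end
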